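(* Let $d\ge1$ and let $G$ be the lattice $\mathbb Z^d$ (with $x\sim y$ iff $|x-y|_1=1$), unweighted, with Laplacian $\Delta u(x)=\frac1{\mu_0}\sum_{y\sim x}(u(y)-u(x))$ for a constant $\mu_0>0$, and $L=-\Delta$. Then for every $a>0$ there exists $v:\mathbb Z^d\to\mathbb R$ with $Lv(0)=a$, $Lv(0)\ge Lv(y)$ for all $y\sim0$, and $$\Delta\Psi_{\Upsilon'}(v)(0)=F(Lv(0))=F(a),$$ where $F(a)=\frac{D}{\mu_0^2}\exp\big(-\frac{\mu_0}{D}a\big)\big[\Upsilon\big(\frac{2\mu_0}{D}a\big)+(D-1)\Upsilon\big(-\frac{2\mu_0}{D(D-1)}a\big)\big]$ with $D=2d$.
   Context: $\Psi_H(v)(x)=\frac1{\mu_0}\sum_{y\sim x}H(v(y)-v(x))$ for $H:\mathbb R\to\mathbb R$; $\Upsilon(z)=e^z-1-z$, $\Upsilon'(z)=e^z-1$. *)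

theory Defs
  imports "HOL-Analysis.Analysis"
begin

text \<open>Vertices of the lattice Z^d are vectors int ^ 'd, with d = CARD('d) (d >= 1 automatically).\<close>

definition l1dist :: "int ^ 'd \<Rightarrow> int ^ 'd \<Rightarrow> int" where
  "l1dist x y = (\<Sum>i\<in>UNIV. \<bar>x $ i - y $ i\<bar>)"

definition zadj :: "int ^ 'd \<Rightarrow> int ^ 'd \<Rightarrow> bool" where
  "zadj x y \<longleftrightarrow> l1dist x y = 1"

definition zneighbors :: "int ^ 'd \<Rightarrow> (int ^ 'd) set" where
  "zneighbors x = {y. zadj x y}"

definition Lap :: "real \<Rightarrow> (int ^ 'd \<Rightarrow> real) \<Rightarrow> int ^ 'd \<Rightarrow> real" where
  "Lap mu0 u x = (1 / mu0) * (\<Sum>y\<in>zneighbors x. u y - u x)"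

definition Lop :: "real \<Rightarrow> (int ^ 'd \<Rightarrow> real) \<Rightarrow> int ^ 'd \<Rightarrow> real" where
  "Lop mu0 u x = - Lap mu0 u x"

definition Psi :: "real \<Rightarrow> (real \<Rightarrow> real) \<Rightarrow> (int ^ 'd \<Rightarrow> real) \<Rightarrow> int ^ 'd \<Rightarrow> real" where
  "Psi mu0 H v x = (1 / mu0) * (\<Sum>y\<in>zneighbors x. H (v y - v x))"

definition Upsilon :: "real \<Rightarrow> real" where
  "Upsilon z = exp z - 1 - z"

definition Upsilon' :: "real \<Rightarrow> real" where
  "Upsilon' z = exp z - 1"

definition Fbound :: "real \<Rightarrow> real \<Rightarrow> real \<Rightarrow> real" where
  "Fbound D mu0 a = D / mu0\<^sup>2 * exp (- (mu0 / D) * a) *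
     (Upsilon (2 * mu0 / D * a) + (D - 1) * Upsilon (- (2 * mu0 / (D * (D - 1))) * a))"

end

theory Submission
  imports Defs
begin

lemma l1_axis: "l1dist 0 (axis i (s::int) :: int^'d) = \<bar>s\<bar>"
  unfolding l1dist_def axis_def
  by (simp add: if_distrib cong: if_cong)

lemma l1_one:
  fixes y :: "int^'d"
  assumes "l1dist 0 y = 1"
  shows "\<exists>i. y = axis i 1 \<or> y = axis i (-1)"
proof -
  have S: "(\<Sum>j\<in>UNIV. \<bar>y $ j\<bar>) = 1" using assms by (simp add: l1dist_def)
  obtain i where i: "y $ i \<noteq> 0"
  proof (rule ccontr)
    assume "\<not> thesis"
    then have "\<forall>j. y $ j = 0" using that by blast
    then show False using S by simp
  qed
  have split: "(\<Sum>j\<in>UNIV. \<bar>y $ j\<bar>) = \<bar>y $ i\<bar> + (\<Sum>j\<in>UNIV-{i}. \<bar>y $ j\<bar>)"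
    by (simp add: sum.remove)
  have nn: "(\<Sum>j\<in>UNIV-{i}. \<bar>y $ j\<bar>) \<ge> 0" by (simp add: sum_nonneg)
  have yi: "\<bar>y $ i\<bar> = 1" using S split nn i by linarith
  then have "(\<Sum>j\<in>UNIV-{i}. \<bar>y $ j\<bar>) = 0" using S split by linarith
  then have z: "\<forall>j\<in>UNIV-{i}. \<bar>y $ j\<bar> = 0"
    by (subst (asm) sum_nonneg_eq_0_iff) auto
  have "y = axis i (y $ i)"
    unfolding vec_eq_iff axis_def using z by auto
  moreover have "y $ i = 1 \<or> y $ i = -1" using yi by linarith
  ultimately show ?thesis by (metis)
qed

lemma nb0: "zneighbors (0::int^'d) = range (\<lambda>i. axis i 1) \<union> range (\<lambda>i. axis i (-1))"
proof
  show "zneighbors (0::int^'d) \<subseteq> range (\<lambda>i. axis i 1) \<union> range (\<lambda>i. axis i (-1))"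
  proof
    fix y :: "int^'d" assume "y \<in> zneighbors 0"
    then have "l1dist 0 y = 1" by (simp add: zneighbors_def zadj_def)
    then obtain i where "y = axis i 1 \<or> y = axis i (-1)" using l1_one by blast
    then show "y \<in> range (\<lambda>i. axis i 1) \<union> range (\<lambda>i. axis i (-1))" by blast
  qed
  show "range (\<lambda>i. axis i 1) \<union> range (\<lambda>i. axis i (-1)) \<subseteq> zneighbors (0::int^'d)"
    by (auto simp: zneighbors_def zadj_def l1_axis)
qed

lemma card_nb0: "finite (zneighbors (0::int^'d)) \<and> card (zneighbors (0::int^'d)) = 2 * CARD('d)"
proof -
  have i1: "inj (\<lambda>i. axis i (1::int) :: int^'d)" by (auto simp: inj_on_def axis_eq_axis)
  have i2: "inj (\<lambda>i. axis i (-1::int) :: int^'d)" by (auto simp: inj_on_def axis_eq_axis)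
  have dj: "range (\<lambda>i. axis i (1::int) :: int^'d) \<inter> range (\<lambda>i. axis i (-1)) = {}"
    by (auto simp: axis_eq_axis)
  have "card (range (\<lambda>i. axis i (1::int) :: int^'d) \<union> range (\<lambda>i. axis i (-1))) = CARD('d) + CARD('d)"
    by (subst card_Un_disjoint) (auto simp: dj card_image i1 i2)
  then show ?thesis by (simp add: nb0)
qed

lemma adj_shift: "zadj x y \<longleftrightarrow> zadj (0::int^'d) (y - x)"
  unfolding zadj_def l1dist_def by (simp add: abs_minus_commute)

lemma nb_shift: "zneighbors (x::int^'d) = (\<lambda>z. x + z) ` zneighbors 0"
proof -
  have 1: "y \<in> (\<lambda>z. x + z) ` zneighbors 0" if "y \<in> zneighbors x" for y
  proof -
    have "zadj 0 (y - x)" using that adj_shift[of x y] by (simp add: zneighbors_def)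
    then have "y - x \<in> zneighbors 0" by (simp add: zneighbors_def)
    moreover have "y = x + (y - x)" by simp
    ultimately show ?thesis by (rule rev_image_eqI)
  qed
  have 2: "x + z \<in> zneighbors x" if "z \<in> zneighbors 0" for z
  proof -
    have "zadj x (x + z) = zadj 0 (x + z - x)" by (rule adj_shift)
    then show ?thesis using that by (simp add: zneighbors_def)
  qed
  show ?thesis using 1 2 by blast
qed

lemma card_nb: "finite (zneighbors (x::int^'d)) \<and> card (zneighbors x) = 2 * CARD('d)"
proof -
  have "inj_on (\<lambda>z. x + z) (zneighbors 0)" by (simp add: inj_on_def)
  then show ?thesis using card_nb0[where 'd='d] nb_shift[of x] by (simp add: card_image)
qed

lemma adj_sym: "zadj (x::int^'d) y \<longleftrightarrow> zadj y x"
  unfolding zadj_def l1dist_def by (simp add: abs_minus_commute)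

lemma parity: "even (l1dist x (y::int^'d)) \<longleftrightarrow> even (\<Sum>i\<in>UNIV. x $ i - y $ i)"
proof -
  have "even (\<Sum>i\<in>UNIV. \<bar>x $ i - y $ i\<bar> - (x $ i - y $ i))"
    by (rule dvd_sum) (auto simp: abs_if)
  then have "even ((\<Sum>i\<in>UNIV. \<bar>x $ i - y $ i\<bar>) - (\<Sum>i\<in>UNIV. x $ i - y $ i))"
    by (simp add: sum_subtractf)
  then show ?thesis unfolding l1dist_def by (metis dvd_add_right_iff diff_add_cancel)
qed

lemma second_layer:
  fixes y z :: "int^'d"
  assumes "zadj 0 y" "zadj y z"
  shows "\<not> zadj 0 z"
proof
  assume h: "zadj 0 z"
  have o1: "odd (\<Sum>i\<in>UNIV. 0 $ i - y $ i)" using assms(1) parity[of 0 y] by (simp add: zadj_def)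
  have o2: "odd (\<Sum>i\<in>UNIV. y $ i - z $ i)" using assms(2) parity[of y z] by (simp add: zadj_def)
  have o3: "odd (\<Sum>i\<in>UNIV. 0 $ i - z $ i)" using h parity[of 0 z] by (simp add: zadj_def)
  have "(\<Sum>i\<in>UNIV. 0 $ i - z $ i) = (\<Sum>i\<in>UNIV. 0 $ i - y $ i) + (\<Sum>i\<in>UNIV. y $ i - z $ i)"
    by (simp add: sum.distrib[symmetric])
  then show False using o1 o2 o3 by simp
qed

lemma zero_not_adj: "\<not> zadj (0::int^'d) 0"
  unfolding zadj_def l1dist_def by simp

lemma sum_layer:
  fixes y :: "int^'d" and g :: "int^'d \<Rightarrow> real"
  assumes "zadj 0 y" "\<And>z. zadj y z \<Longrightarrow> z \<noteq> 0 \<Longrightarrow> g z = k"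
  shows "(\<Sum>z\<in>zneighbors y. g z) = g 0 + (2 * real CARD('d) - 1) * k"
proof -
  have f: "finite (zneighbors y)" and c: "card (zneighbors y) = 2 * CARD('d)" using card_nb by auto
  have m: "0 \<in> zneighbors y" using assms(1) adj_sym unfolding zneighbors_def by auto
  have "(\<Sum>z\<in>zneighbors y. g z) = g 0 + (\<Sum>z\<in>zneighbors y - {0}. g z)"
    using f m by (simp add: sum.remove)
  also have "(\<Sum>z\<in>zneighbors y - {0}. g z) = (\<Sum>z\<in>zneighbors y - {0}. k)"
    by (rule sum.cong) (auto simp: zneighbors_def assms(2))
  also have "\<dots> = (2 * real CARD('d) - 1) * k"
    using f m c by (simp add: card_Diff_singleton of_nat_diff)
  finally show ?thesis .
qed

theorem theorem3p12:
  fixes mu0 a :: real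
  assumes "mu0 > 0" and "a > 0"
  shows "\<exists>v :: int ^ 'd \<Rightarrow> real.
           Lop mu0 v 0 = a \<and>
           (\<forall>y. zadj 0 y \<longrightarrow> Lop mu0 v 0 \<ge> Lop mu0 v y) \<and>
           Lap mu0 (Psi mu0 Upsilon' v) 0 = Fbound (2 * real CARD('d)) mu0 (Lop mu0 v 0) \<and>
           Fbound (2 * real CARD('d)) mu0 (Lop mu0 v 0) = Fbound (2 * real CARD('d)) mu0 a"
proof -
  define D where "D = 2 * real CARD('d)"
  have D2: "D \<ge> 2" unfolding D_def using card_ge_0_finite[of "UNIV::'d set"] by simp
  define b where "b = - mu0 * a / D"
  define c where "c = 2 * b * D / (D - 1)"
  define v :: "int^'d \<Rightarrow> real" where "v x = (if x = 0 then 0 else if zadj 0 x then b else c)" for x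
  have f0: "finite (zneighbors (0::int^'d))" and c0: "real (card (zneighbors (0::int^'d))) = D"
    using card_nb0[where 'd='d] unfolding D_def by auto
  have v0: "v 0 = 0" by (simp add: v_def)
  have vN: "v y = b" if "y \<in> zneighbors 0" for y
    using that zero_not_adj by (auto simp: v_def zneighbors_def)
  have vS: "v z = c" if "zadj 0 y" "zadj y z" "z \<noteq> 0" for y z
    using second_layer[OF that(1,2)] that(3) by (simp add: v_def)
  have vy: "v y = b" if "zadj 0 y" for y using vN that by (simp add: zneighbors_def)
  have L0: "Lop mu0 v 0 = a"
  proof -
    have "(\<Sum>y\<in>zneighbors 0. v y - v 0) = (\<Sum>y\<in>zneighbors (0::int^'d). b)"
      by (rule sum.cong) (auto simp: v0 vN)
    then have "(\<Sum>y\<in>zneighbors 0. v y - v 0) = D * b" using c0 by simp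
    then show ?thesis using assms D2 unfolding Lop_def Lap_def b_def by (simp add: field_simps)
  qed
  have Ly: "Lop mu0 v y = a" if "zadj 0 y" for y
  proof -
    have "(\<Sum>z\<in>zneighbors y. v z - v y) = (v 0 - v y) + (D - 1) * (c - v y)"
      using sum_layer[OF that, of "\<lambda>z. v z - v y" "c - v y"] vS[OF that] unfolding D_def by simp
    also have "\<dots> = D * b" using D2 by (simp add: v0 vy[OF that] c_def field_simps)
    finally show ?thesis using assms D2 unfolding Lop_def Lap_def b_def by (simp add: field_simps)
  qed
  have P0: "Psi mu0 Upsilon' v 0 = (1/mu0) * (D * (exp b - 1))"
  proof -
    have "(\<Sum>y\<in>zneighbors 0. Upsilon' (v y - v 0)) = (\<Sum>y\<in>zneighbors (0::int^'d). exp b - 1)"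
      by (rule sum.cong) (auto simp: v0 vN Upsilon'_def)
    then show ?thesis using c0 unfolding Psi_def by simp
  qed
  have Py: "Psi mu0 Upsilon' v y = (1/mu0) * ((exp (-b) - 1) + (D - 1) * (exp (c - b) - 1))"
    if "zadj 0 y" for y
    using sum_layer[OF that, of "\<lambda>z. Upsilon' (v z - v y)" "exp (c - b) - 1"] vS[OF that] vy[OF that]
    unfolding Psi_def D_def by (simp add: v0 Upsilon'_def)
  have LP: "Lap mu0 (Psi mu0 Upsilon' v) 0 = (1/mu0) * (D * ((1/mu0) * ((exp (-b) - 1) + (D - 1) * (exp (c - b) - 1)) - (1/mu0) * (D * (exp b - 1))))"
  proof -
    have "(\<Sum>y\<in>zneighbors 0. Psi mu0 Upsilon' v y - Psi mu0 Upsilon' v 0) =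
      (\<Sum>y\<in>zneighbors (0::int^'d). (1/mu0) * ((exp (-b) - 1) + (D - 1) * (exp (c - b) - 1)) - (1/mu0) * (D * (exp b - 1)))"
      by (rule sum.cong) (auto simp: P0 Py zneighbors_def)
    then show ?thesis using c0 unfolding Lap_def by simp
  qed
  have cb: "c - b = b + 2 * b / (D - 1)" using D2 unfolding c_def by (simp add: field_simps)
  have e1: "exp (- (mu0 / D) * a) = exp b" unfolding b_def by (simp add: field_simps)
  have e2: "2 * mu0 / D * a = - 2 * b" unfolding b_def using D2 by (simp add: field_simps)
  have e3: "- (2 * mu0 / (D * (D - 1))) * a = 2 * b / (D - 1)" unfolding b_def using D2 by (simp add: field_simps)
  have F: "Fbound D mu0 a = D / mu0\<^sup>2 * exp b * (Upsilon (- 2 * b) + (D - 1) * Upsilon (2 * b / (D - 1)))"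
    unfolding Fbound_def e1 e2 e3 by simp
  have ex: "exp (c - b) = exp b * exp (2 * b / (D - 1))" by (simp add: cb exp_add)
  have ex2: "exp b * exp (- 2 * b) = exp (-b)" by (simp add: exp_add[symmetric])
  have D1: "D - 1 \<noteq> 0" using D2 by simp
  have inner: "exp b * (Upsilon (- 2 * b) + (D - 1) * Upsilon (2 * b / (D - 1)))
     = (exp (-b) - 1) + (D - 1) * (exp b * exp (2 * b / (D - 1)) - 1) - D * (exp b - 1)"
  proof -
    have "exp b * (Upsilon (- 2 * b) + (D - 1) * Upsilon (2 * b / (D - 1)))
      = exp b * exp (- 2 * b) - exp b + 2 * b * exp b + (D - 1) * (exp b * exp (2 * b / (D - 1)) - exp b)
        - exp b * ((D - 1) * (2 * b / (D - 1)))"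
      unfolding Upsilon_def by (simp add: algebra_simps)
    also have "exp b * ((D - 1) * (2 * b / (D - 1))) = 2 * b * exp b" using D1 by simp
    finally show ?thesis using ex2 by (simp add: algebra_simps)
  qed
  have "Lap mu0 (Psi mu0 Upsilon' v) 0 = D / mu0\<^sup>2 * ((exp (-b) - 1) + (D - 1) * (exp b * exp (2 * b / (D - 1)) - 1) - D * (exp b - 1))"
    unfolding LP ex by (simp add: power2_eq_square algebra_simps)
  also have "\<dots> = Fbound D mu0 a" unfolding F inner[symmetric] by (simp add: algebra_simps)
  finally have "Lap mu0 (Psi mu0 Upsilon' v) 0 = Fbound D mu0 a" .
  note LPF = this
  show ?thesis unfolding D_def[symmetric]
  proof (intro exI[of _ v] conjI allI impI)
    show "Lop mu0 v 0 = a" by (rule L0)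
    show "Lop mu0 v y \<le> Lop mu0 v 0" if "zadj 0 y" for y using Ly[OF that] L0 by simp
    show "Lap mu0 (Psi mu0 Upsilon' v) 0 = Fbound D mu0 (Lop mu0 v 0)" using LPF L0 by simp
    show "Fbound D mu0 (Lop mu0 v 0) = Fbound D mu0 a" using L0 by simp
  qed
qed

end
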